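(* Let $n\ge 3$ and let $L^B$ be a blow-up of $L\cong\mathbf{2}^n$ in which the atoms $q_1,\dots,q_n$ of $L$ are not replaced by longer chains (i.e. $|C_{q_i}|=1$ for all $i$). Then a vertex $x$ of $G(L^B)^{**}$ is isolated if and only if $x$ is an atom of $L^B$.
   Context: Blow-up: for $L\cong\mathbf{2}^n$ with atoms $q_1,\dots,q_n$, replace each $a\in L\setminus\{0,1\}$ by a finite chain $C_a$: $a=a^1\lessdot\cdots\lessdot a^{k_a}$ ($k_a\ge1$), keep $0,1$; elements of one chain are ordered along it, and for $u\in C_a,v\in C_b$ with $a\ne b$ ($C_0=\{0\},C_1=\{1\}$), $u\le v$ iff $a<b$ in $L$. $G(L^B)$ is the zero-divisor graph of $L^B$ (vertices: nonzero elements with a nonzero element meeting them in $0$; adjacency: meet $=0$). For $x\in L^B$, $x^\perp=\{z:x\wedge z=0\}$, $[x]=\{y: y^\perp=x^\perp\}$, and the classes are ordered by $[a]\le[b]$ iff $b^\perp\subseteq a^\perp$, with $[a]\wedge[b]=[a\wedge b]$. The graph $G(L^B)^{**}$ has the same vertex set as $G(L^B)$, and distinct vertices $x,y$ are adjacent iff either $[x]=[y]$, or $[x]\wedge[y]\neq[0]$ and $[x],[y]$ are incomparable (equivalently, $a\wedge b\ne0$, $a\not\le b$, $b\not\le a$ for all $a\in[x]$, $b\in[y]$). *)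

theory Defs
  imports Main
begin

text \<open>The Boolean lattice 2^n is modelled as the subsets of {0..<n}; its atoms are
the singletons. A blow-up is given by chain lengths k a (for a proper nonempty a);
the element a^i of the chain C_a is the pair (a, i), 1 <= i <= k a.
The bottom and top are kept: their chain has length 1.\<close>

type_synonym bel = "nat set \<times> nat"

definition chainlen :: "nat \<Rightarrow> (nat set \<Rightarrow> nat) \<Rightarrow> nat set \<Rightarrow> nat" where
  "chainlen n k a = (if a = {} \<or> a = {0..<n} then 1 else k a)"

definition carrierB :: "nat \<Rightarrow> (nat set \<Rightarrow> nat) \<Rightarrow> bel set" where
  "carrierB n k = {(a, i). a \<subseteq> {0..<n} \<and> 1 \<le> i \<and> i \<le> chainlen n k a}"

definition leB :: "bel \<Rightarrow> bel \<Rightarrow> bool" where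
  "leB u v = ((fst u = fst v \<and> snd u \<le> snd v) \<or> fst u \<subset> fst v)"

definition zeroB :: bel where
  "zeroB = ({}, 1)"

definition meetB :: "nat \<Rightarrow> (nat set \<Rightarrow> nat) \<Rightarrow> bel \<Rightarrow> bel \<Rightarrow> bel" where
  "meetB n k x y = (THE z. z \<in> carrierB n k \<and> leB z x \<and> leB z y \<and>
      (\<forall>w \<in> carrierB n k. leB w x \<and> leB w y \<longrightarrow> leB w z))"

definition perpB :: "nat \<Rightarrow> (nat set \<Rightarrow> nat) \<Rightarrow> bel \<Rightarrow> bel set" where
  "perpB n k x = {z \<in> carrierB n k. meetB n k x z = zeroB}"

definition zdverts :: "nat \<Rightarrow> (nat set \<Rightarrow> nat) \<Rightarrow> bel set" where
  "zdverts n k = {x \<in> carrierB n k. x \<noteq> zeroB \<and>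
      (\<exists>y \<in> carrierB n k. y \<noteq> zeroB \<and> meetB n k x y = zeroB)}"

text \<open>Order on classes: [a] <= [b] iff b^perp \<subseteq> a^perp; [x] \<and> [y] = [x \<and> y].\<close>
definition class_le :: "nat \<Rightarrow> (nat set \<Rightarrow> nat) \<Rightarrow> bel \<Rightarrow> bel \<Rightarrow> bool" where
  "class_le n k a b = (perpB n k b \<subseteq> perpB n k a)"

definition adjSS :: "nat \<Rightarrow> (nat set \<Rightarrow> nat) \<Rightarrow> bel \<Rightarrow> bel \<Rightarrow> bool" where
  "adjSS n k x y = (x \<in> zdverts n k \<and> y \<in> zdverts n k \<and> x \<noteq> y \<and>
     (perpB n k x = perpB n k y \<or>
      (perpB n k (meetB n k x y) \<noteq> perpB n k zeroB \<and>
       \<not> class_le n k x y \<and> \<not> class_le n k y x)))"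

definition isolatedSS :: "nat \<Rightarrow> (nat set \<Rightarrow> nat) \<Rightarrow> bel \<Rightarrow> bool" where
  "isolatedSS n k x = (x \<in> zdverts n k \<and> (\<forall>y. \<not> adjSS n k x y))"

definition atomB :: "nat \<Rightarrow> (nat set \<Rightarrow> nat) \<Rightarrow> bel \<Rightarrow> bool" where
  "atomB n k x = (x \<in> carrierB n k \<and> x \<noteq> zeroB \<and>
     (\<forall>z \<in> carrierB n k. leB z x \<longrightarrow> z = zeroB \<or> z = x))"

end

theory Submission
  imports Defs
begin

definition K1 :: "nat \<Rightarrow> (nat set \<Rightarrow> nat) \<Rightarrow> bool" where
  "K1 n k = (\<forall>a. a \<subseteq> {0..<n} \<longrightarrow> a \<noteq> {} \<longrightarrow> a \<noteq> {0..<n} \<longrightarrow> k a \<ge> 1)"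

lemma chainlen_pos: "K1 n k \<Longrightarrow> a \<subseteq> {0..<n} \<Longrightarrow> chainlen n k a \<ge> 1"
  unfolding K1_def chainlen_def by auto

lemma leB_antisym: "leB u v \<Longrightarrow> leB v u \<Longrightarrow> u = v"
  unfolding leB_def by (cases u; cases v) auto

lemma meet_char:
  assumes "z \<in> carrierB n k" "leB z x" "leB z y"
    "\<forall>w \<in> carrierB n k. leB w x \<and> leB w y \<longrightarrow> leB w z"
  shows "meetB n k x y = z"
  unfolding meetB_def
  apply (rule the_equality)
  using assms apply blast
  using assms leB_antisym by blast

lemma meet_props:
  assumes K: "K1 n k" and x: "x \<in> carrierB n k" and y: "y \<in> carrierB n k"
  shows "meetB n k x y \<in> carrierB n k \<and> fst (meetB n k x y) = fst x \<inter> fst y"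
proof -
  obtain a i where xa: "x = (a, i)" by (cases x)
  obtain b j where yb: "y = (b, j)" by (cases y)
  have xc: "a \<subseteq> {0..<n}" "1 \<le> i" "i \<le> chainlen n k a" using x xa by (auto simp: carrierB_def)
  have yc: "b \<subseteq> {0..<n}" "1 \<le> j" "j \<le> chainlen n k b" using y yb by (auto simp: carrierB_def)
  show ?thesis
  proof (cases "a = b")
    case True
    have "meetB n k x y = (a, min i j)"
      apply (rule meet_char)
      using xc yc True unfolding xa yb carrierB_def leB_def by auto
    then show ?thesis using xc yc True xa yb by (auto simp: carrierB_def)
  next
    case ne: False
    show ?thesis
    proof (cases "a \<subset> b")
      case True
      have "meetB n k x y = x"
        apply (rule meet_char)
        using x xc yc True unfolding xa yb carrierB_def leB_def by auto
      then show ?thesis using x xa yb True by auto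
    next
      case nab: False
      show ?thesis
      proof (cases "b \<subset> a")
        case True
        have "meetB n k x y = y"
          apply (rule meet_char)
          using y xc yc True unfolding xa yb carrierB_def leB_def by auto
        then show ?thesis using y yb xa True by auto
      next
        case False
        have cp: "chainlen n k (a \<inter> b) \<ge> 1" using chainlen_pos[OF K, of "a \<inter> b"] xc by auto
        have "meetB n k x y = (a \<inter> b, chainlen n k (a \<inter> b))"
          apply (rule meet_char)
          using xc yc cp ne nab False unfolding xa yb carrierB_def leB_def by auto
        then show ?thesis using xc cp xa yb by (auto simp: carrierB_def)
      qed
    qed
  qed
qed

lemma zero_eq: "w \<in> carrierB n k \<Longrightarrow> fst w = {} \<Longrightarrow> w = zeroB"
  unfolding carrierB_def zeroB_def chainlen_def by auto

lemma zero_carrier: "zeroB \<in> carrierB n k"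
  unfolding carrierB_def zeroB_def chainlen_def by auto

lemma meet_zero_iff:
  assumes "K1 n k" "x \<in> carrierB n k" "y \<in> carrierB n k"
  shows "meetB n k x y = zeroB \<longleftrightarrow> fst x \<inter> fst y = {}"
  using meet_props[OF assms] zero_eq[of "meetB n k x y" n k] by (auto simp: zeroB_def)

lemma perp_eq:
  assumes "K1 n k" "x \<in> carrierB n k"
  shows "perpB n k x = {w \<in> carrierB n k. fst x \<inter> fst w = {}}"
  using meet_zero_iff[OF assms(1,2)] unfolding perpB_def by auto

lemma single_carrier: "K1 n k \<Longrightarrow> (\<forall>i<n. k {i} = 1) \<Longrightarrow> q < n \<Longrightarrow> ({q}, 1) \<in> carrierB n k"
  unfolding carrierB_def chainlen_def by auto

lemma perp_sub:
  assumes K: "K1 n k" and S: "\<forall>i<n. k {i} = 1" and x: "x \<in> carrierB n k" and y: "y \<in> carrierB n k"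
  shows "perpB n k x \<subseteq> perpB n k y \<longleftrightarrow> fst y \<subseteq> fst x"
proof
  assume h: "perpB n k x \<subseteq> perpB n k y"
  show "fst y \<subseteq> fst x"
  proof
    fix q assume q: "q \<in> fst y"
    have qn: "q < n" using y q by (auto simp: carrierB_def)
    show "q \<in> fst x"
    proof (rule ccontr)
      assume "q \<notin> fst x"
      then have "({q},1) \<in> perpB n k x" using perp_eq[OF K x] single_carrier[OF K S qn] by auto
      then have "({q},1) \<in> perpB n k y" using h by auto
      then show False using perp_eq[OF K y] q by auto
    qed
  qed
next
  assume "fst y \<subseteq> fst x"
  then show "perpB n k x \<subseteq> perpB n k y" using perp_eq[OF K x] perp_eq[OF K y] by auto
qed

lemma zd_char:
  assumes K: "K1 n k"
  shows "x \<in> zdverts n k \<longleftrightarrow> x \<in> carrierB n k \<and> fst x \<noteq> {} \<and> fst x \<noteq> {0..<n}"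
proof
  assume h: "x \<in> zdverts n k"
  then have xc: "x \<in> carrierB n k" "x \<noteq> zeroB" by (auto simp: zdverts_def)
  then have "fst x \<noteq> {}" using zero_eq by blast
  moreover have "fst x \<noteq> {0..<n}"
  proof
    assume f: "fst x = {0..<n}"
    obtain y where y: "y \<in> carrierB n k" "y \<noteq> zeroB" "meetB n k x y = zeroB" using h by (auto simp: zdverts_def)
    have "fst y \<subseteq> {0..<n}" using y by (auto simp: carrierB_def)
    then have "fst y = {}" using meet_zero_iff[OF K xc(1) y(1)] y f by auto
    then show False using zero_eq y by blast
  qed
  ultimately show "x \<in> carrierB n k \<and> fst x \<noteq> {} \<and> fst x \<noteq> {0..<n}" using xc by auto
next
  assume h: "x \<in> carrierB n k \<and> fst x \<noteq> {} \<and> fst x \<noteq> {0..<n}"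
  define c where "c = {0..<n} - fst x"
  have fx: "fst x \<subseteq> {0..<n}" using h by (auto simp: carrierB_def)
  have cne: "c \<noteq> {}" using h fx c_def by auto
  have "chainlen n k c \<ge> 1" using chainlen_pos[OF K, of c] c_def by auto
  then have yc: "(c, 1) \<in> carrierB n k" using c_def by (auto simp: carrierB_def)
  have "(c,1) \<noteq> zeroB" using cne by (auto simp: zeroB_def)
  moreover have "meetB n k x (c,1) = zeroB" using meet_zero_iff[OF K _ yc] h c_def by auto
  moreover have "x \<noteq> zeroB" using h by (auto simp: zeroB_def)
  ultimately show "x \<in> zdverts n k" using h yc unfolding zdverts_def by blast
qed

theorem mainTheorem6:
  fixes n :: nat and k :: "nat set \<Rightarrow> nat"
  assumes "n \<ge> 3"
    and "\<And>a. a \<subseteq> {0..<n} \<Longrightarrow> a \<noteq> {} \<Longrightarrow> a \<noteq> {0..<n} \<Longrightarrow> k a \<ge> 1"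
    and "\<And>i. i < n \<Longrightarrow> k {i} = 1"
  shows "\<forall>x \<in> zdverts n k. isolatedSS n k x \<longleftrightarrow> atomB n k x"
proof
  have K: "K1 n k" using assms(2) unfolding K1_def by blast
  have S: "\<forall>i<n. k {i} = 1" using assms(3) by blast
  fix x assume xz: "x \<in> zdverts n k"
  have xc: "x \<in> carrierB n k" "fst x \<noteq> {}" "fst x \<noteq> {0..<n}" using xz zd_char[OF K] by auto
  have fx: "fst x \<subseteq> {0..<n}" using xc by (auto simp: carrierB_def)
  have chl1: "chainlen n k {q} = 1" if "q < n" for q using S that by (auto simp: chainlen_def)
  have A: "atomB n k x \<longleftrightarrow> (\<exists>q. x = ({q},1))"
  proof
    assume at: "atomB n k x"
    obtain q where q: "q \<in> fst x" using xc by auto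
    have qn: "q < n" using q fx by auto
    have qc: "({q},1) \<in> carrierB n k" using single_carrier[OF K S qn] .
    show "\<exists>q. x = ({q},1)"
    proof (cases "fst x = {q}")
      case True
      have "snd x \<le> 1" using xc(1) True chl1[OF qn] by (auto simp: carrierB_def)
      moreover have "snd x \<ge> 1" using xc(1) by (auto simp: carrierB_def)
      ultimately have "x = ({q},1)" using True by (cases x) auto
      then show ?thesis by blast
    next
      case False
      then have "leB ({q},1) x" using q unfolding leB_def by auto
      then have "({q},1) = zeroB \<or> ({q},1) = x" using at qc unfolding atomB_def by blast
      then show ?thesis by (auto simp: zeroB_def)
    qed
  next
    assume "\<exists>q. x = ({q},1)"
    then obtain q where q: "x = ({q},1)" by blast
    show "atomB n k x" unfolding atomB_def
    proof (intro conjI ballI impI)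
      show "x \<in> carrierB n k" using xc by simp
      show "x \<noteq> zeroB" using q by (simp add: zeroB_def)
      fix z assume zc: "z \<in> carrierB n k" and "leB z x"
      then have "(fst z = {q} \<and> snd z \<le> 1) \<or> fst z \<subset> {q}" using q unfolding leB_def by auto
      moreover have "snd z \<ge> 1" using zc by (auto simp: carrierB_def)
      ultimately have "z = x \<or> fst z = {}" using q by (cases z) auto
      then show "z = zeroB \<or> z = x" using zero_eq zc by blast
    qed
  qed
  have cl: "class_le n k u v \<longleftrightarrow> fst u \<subseteq> fst v" if "u \<in> carrierB n k" "v \<in> carrierB n k" for u v
    unfolding class_le_def using perp_sub[OF K S that(2) that(1)] .
  have pz: "perpB n k zeroB = carrierB n k"
    using perp_eq[OF K zero_carrier] by (auto simp: zeroB_def)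
  have pm: "perpB n k (meetB n k u v) \<noteq> perpB n k zeroB \<longleftrightarrow> fst u \<inter> fst v \<noteq> {}"
    if "u \<in> carrierB n k" "v \<in> carrierB n k" for u v
  proof -
    have mp: "meetB n k u v \<in> carrierB n k" "fst (meetB n k u v) = fst u \<inter> fst v"
      using meet_props[OF K that] by auto
    show ?thesis
    proof
      assume "perpB n k (meetB n k u v) \<noteq> perpB n k zeroB"
      then show "fst u \<inter> fst v \<noteq> {}" using perp_eq[OF K mp(1)] mp pz by auto
    next
      assume "fst u \<inter> fst v \<noteq> {}"
      then obtain q where q: "q \<in> fst u \<inter> fst v" by blast
      have "q < n" using q that by (auto simp: carrierB_def)
      then have "({q},1) \<in> carrierB n k" using single_carrier[OF K S] by blast
      moreover have "({q},1) \<notin> perpB n k (meetB n k u v)" using perp_eq[OF K mp(1)] mp q by auto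
      ultimately show "perpB n k (meetB n k u v) \<noteq> perpB n k zeroB" using pz by auto
    qed
  qed
  have pe: "perpB n k u = perpB n k v \<longleftrightarrow> fst u = fst v"
    if "u \<in> carrierB n k" "v \<in> carrierB n k" for u v
    using perp_sub[OF K S that] perp_sub[OF K S that(2) that(1)] by blast
  have I: "isolatedSS n k x \<longleftrightarrow> (\<exists>q. x = ({q},1))"
  proof
    assume iso: "isolatedSS n k x"
    show "\<exists>q. x = ({q},1)"
    proof (rule ccontr)
      assume ns: "\<nexists>q. x = ({q},1)"
      obtain q where q: "q \<in> fst x" using xc by auto
      have nsing: "fst x \<noteq> {q}"
      proof
        assume e: "fst x = {q}"
        have qn: "q < n" using q fx by auto
        have "snd x \<le> 1" "snd x \<ge> 1" using xc(1) e chl1[OF qn] by (auto simp: carrierB_def)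
        then have "x = ({q},1)" using e by (cases x) auto
        then show False using ns by blast
      qed
      then obtain p where p: "p \<in> fst x" "p \<noteq> q" using q by blast
      have "\<exists>r. r < n \<and> r \<notin> fst x" using xc(3) fx by (metis atLeastLessThan_iff subsetI subset_antisym zero_le)
      then obtain r where r: "r < n" "r \<notin> fst x" by blast
      have qn: "q < n" using q fx by auto
      define b where "b = {q, r}"
      have bs: "b \<subseteq> {0..<n}" using qn r b_def by auto
      have bf: "b \<noteq> {0..<n}"
      proof
        assume "b = {0..<n}"
        then have "card b = n" by simp
        moreover have "card b \<le> 2" unfolding b_def by (simp add: card_insert_le_m1)
        ultimately show False using assms(1) by simp
      qed
      have "chainlen n k b \<ge> 1" using chainlen_pos[OF K bs] .
      then have yc: "(b,1) \<in> carrierB n k" using bs by (auto simp: carrierB_def)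
      have yz: "(b,1) \<in> zdverts n k" using zd_char[OF K] yc bf b_def by auto
      have "adjSS n k x (b,1)"
        unfolding adjSS_def
        using xz yz pm[OF xc(1) yc] cl[OF xc(1) yc] cl[OF yc xc(1)] q p r b_def by auto
      then show False using iso unfolding isolatedSS_def by blast
    qed
  next
    assume "\<exists>q. x = ({q},1)"
    then obtain q where q: "x = ({q},1)" by blast
    show "isolatedSS n k x" unfolding isolatedSS_def
    proof (intro conjI allI notI)
      show "x \<in> zdverts n k" by (rule xz)
      fix y assume ad: "adjSS n k x y"
      then have yz: "y \<in> zdverts n k" and ne: "x \<noteq> y" unfolding adjSS_def by auto
      have yc: "y \<in> carrierB n k" "fst y \<noteq> {}" using yz zd_char[OF K] by auto
      have "perpB n k x = perpB n k y \<or> (fst x \<inter> fst y \<noteq> {} \<and> \<not> fst x \<subseteq> fst y)"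
        using ad unfolding adjSS_def using pm[OF xc(1) yc(1)] cl[OF xc(1) yc(1)] by auto
      then have "fst y = {q}" using pe[OF xc(1) yc(1)] q by auto
      moreover have qn: "q < n" using xc q by (auto simp: carrierB_def)
      ultimately have "snd y \<le> 1" "snd y \<ge> 1" using yc chl1[OF qn] by (auto simp: carrierB_def)
      then have "y = x" using q \<open>fst y = {q}\<close> by (cases y) auto
      then show False using ne by simp
    qed
  qed
  show "isolatedSS n k x \<longleftrightarrow> atomB n k x" using A I by simp
qed

end
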